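(* Let $n\ge2$, $\gamma\in\mathbb{R}$, $l,u\in\mathbb{R}^n$ with $l\le u$, and $\mathcal{X}=\{x\in\mathbb{R}^n:\sum_m x_m=\gamma,\ l_m\le x_m\le u_m\ \forall m\}\neq\emptyset$. Let $f:\mathbb{R}^n\to\mathbb{R}$ be differentiable and assume there is $L_2>0$ such that for all $x\in\mathcal{X}$, all $i\neq j$ and all $d$ with $d_i=-d_j$, $d_m=0$ for $m\notin\{i,j\}$ and $x+d\in\mathcal{X}$, $\|\nabla_{ij}f(x+d)-\nabla_{ij}f(x)\|_2\le L_2\|d\|_2$. Let $f^*=\inf_{\mathcal{X}}f$ and assume there is $\mu_2>0$ with \[ -L_2\min_{y\in\mathcal{X}}\Big\{\nabla f(x)^\top(y-x)+\tfrac{L_2}{2}\|y-x\|_2^2\Big\}\ge\mu_2(f(x)-f^* )\quad\text{for all }x\in\mathcal{X}. \] Let $x^0\in\mathcal{X}$ and $x^{k+1}=x^k+d^k$, where $(i_k,j_k,d^k)$ minimizes $\nabla f(x^k)^\top d+\frac{L_2}{2}\|d\|_2^2$ over all pairs $i\neq j$ and all $d$ with $d_i+d_j=0$, $d_m=0$ for $m\notin\{i,j\}$, and $x^k+d\in\mathcal{X}$ (the GS-q rule with step size $1/L_2$). Then for all $k\ge0$, \[ f(x^k)-f^*\le\Big(1-\frac{\mu_2}{L_2(n-1)}\Big)^k\big(f(x^0)-f^*\big). \]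
   Context: $\nabla_{ij}f(x)=(\nabla_if(x),\nabla_jf(x))\in\mathbb{R}^2$. The assumption on $\mu_2$ is the proximal-PL inequality in the 2-norm on the feasible set $\mathcal{X}$. *)

theory Defs
  imports "HOL-Analysis.Analysis"
begin

definition feasible_set :: "real \<Rightarrow> real^'n \<Rightarrow> real^'n \<Rightarrow> (real^'n) set" where
  "feasible_set \<gamma> l u = {x. (\<Sum>m\<in>UNIV. x $ m) = \<gamma> \<and> (\<forall>m. l $ m \<le> x $ m \<and> x $ m \<le> u $ m)}"

definition pair_dir :: "'n \<Rightarrow> 'n \<Rightarrow> real^'n \<Rightarrow> bool" where
  "pair_dir i j d \<longleftrightarrow> i \<noteq> j \<and> d $ i + d $ j = 0 \<and> (\<forall>m. m \<noteq> i \<and> m \<noteq> j \<longrightarrow> d $ m = 0)"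

definition pair_norm :: "real^'n \<Rightarrow> 'n \<Rightarrow> 'n \<Rightarrow> real" where
  "pair_norm g i j = sqrt ((g $ i)\<^sup>2 + (g $ j)\<^sup>2)"

end

theory Submission imports Defs begin

lemma sum_pair:
  fixes h :: "'n::finite \<Rightarrow> real"
  assumes "i \<noteq> j" "\<forall>m. m \<noteq> i \<and> m \<noteq> j \<longrightarrow> h m = 0"
  shows "(\<Sum>m\<in>UNIV. h m) = h i + h j"
proof -
  have "(\<Sum>m\<in>UNIV. h m) = (\<Sum>m\<in>{i,j}. h m)"
    by (rule sum.mono_neutral_right) (use assms in auto)
  then show ?thesis using assms by simp
qed

lemma inner_pair:
  fixes v d :: "real^'n"
  assumes "i \<noteq> j" "\<forall>m. m \<noteq> i \<and> m \<noteq> j \<longrightarrow> d $ m = 0"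
  shows "v \<bullet> d = v$i * d$i + v$j * d$j"
  unfolding inner_vec_def inner_real_def
  by (rule sum_pair) (use assms in auto)

lemma norm_pair:
  fixes d :: "real^'n"
  assumes "i \<noteq> j" "\<forall>m. m \<noteq> i \<and> m \<noteq> j \<longrightarrow> d $ m = 0"
  shows "norm d = sqrt ((d$i)\<^sup>2 + (d$j)\<^sup>2)"
proof -
  have "(norm d)\<^sup>2 = (d$i)\<^sup>2 + (d$j)\<^sup>2"
    using inner_pair[OF assms, of d] by (simp add: power2_norm_eq_inner[symmetric] power2_eq_square)
  then show ?thesis by (metis norm_ge_zero real_sqrt_unique)
qed

lemma cs2:
  fixes a b c e :: real
  shows "a*c + b*e \<le> sqrt (a\<^sup>2+b\<^sup>2) * sqrt (c\<^sup>2+e\<^sup>2)"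
proof -
  have "(a*c+b*e)\<^sup>2 \<le> (a\<^sup>2+b\<^sup>2) * (c\<^sup>2+e\<^sup>2)"
    using sum_squares_ge_zero[of "a*e - b*c" 0] by (simp add: power2_eq_square algebra_simps)
  then have "\<bar>a*c+b*e\<bar> \<le> sqrt ((a\<^sup>2+b\<^sup>2) * (c\<^sup>2+e\<^sup>2))"
    by (metis real_sqrt_abs real_sqrt_le_mono)
  then show ?thesis by (simp add: real_sqrt_mult)
qed


lemma seg_feasible:
  fixes x d :: "real^'n"
  assumes "x \<in> feasible_set \<gamma> l u" "x + d \<in> feasible_set \<gamma> l u" "0 \<le> t" "t \<le> 1"
  shows "x + t *\<^sub>R d \<in> feasible_set \<gamma> l u"
proof -
  have sx: "(\<Sum>m\<in>UNIV. x $ m) = \<gamma>" and sxd: "(\<Sum>m\<in>UNIV. x $ m + d $ m) = \<gamma>"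
    using assms(1,2) by (auto simp: feasible_set_def)
  have sd: "(\<Sum>m\<in>UNIV. d $ m) = 0" using sx sxd by (simp add: sum.distrib)
  have "(\<Sum>m\<in>UNIV. x $ m + t * d $ m) = \<gamma>"
    using sx sd by (simp add: sum.distrib sum_distrib_left[symmetric])
  moreover have "l $ m \<le> x $ m + t * d $ m \<and> x $ m + t * d $ m \<le> u $ m" for m
  proof -
    have a: "l $ m \<le> x $ m" "x $ m \<le> u $ m" "l $ m \<le> x $ m + d $ m" "x $ m + d $ m \<le> u $ m"
      using assms(1,2) by (auto simp: feasible_set_def)
    have "x $ m + t * d $ m = (1 - t) * x $ m + t * (x $ m + d $ m)" by (simp add: algebra_simps)
    moreover have "(1 - t) * l $ m + t * l $ m \<le> (1 - t) * x $ m + t * (x $ m + d $ m)"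
      using a assms(3,4) by (intro add_mono mult_left_mono) auto
    moreover have "(1 - t) * x $ m + t * (x $ m + d $ m) \<le> (1 - t) * u $ m + t * u $ m"
      using a assms(3,4) by (intro add_mono mult_left_mono) auto
    ultimately show ?thesis by (simp add: algebra_simps)
  qed
  ultimately show ?thesis by (simp add: feasible_set_def)
qed

lemma descent:
  fixes f :: "real^'n \<Rightarrow> real" and grad :: "real^'n \<Rightarrow> real^'n" and x d :: "real^'n"
  assumes diff: "\<forall>x. (f has_derivative (\<lambda>h. grad x \<bullet> h)) (at x)"
    and lip: "\<forall>x\<in>feasible_set \<gamma> l u. \<forall>i j d. i \<noteq> j \<and> d $ i = - d $ j
              \<and> (\<forall>m. m \<noteq> i \<and> m \<noteq> j \<longrightarrow> d $ m = 0) \<and> x + d \<in> feasible_set \<gamma> l u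
              \<longrightarrow> pair_norm (grad (x + d) - grad x) i j \<le> L2 * norm d"
    and x: "x \<in> feasible_set \<gamma> l u" and xd: "x + d \<in> feasible_set \<gamma> l u"
    and pd: "pair_dir i j d"
  shows "f (x + d) \<le> f x + grad x \<bullet> d + L2 / 2 * (norm d)\<^sup>2"
proof -
  have ij: "i \<noteq> j" and dij: "d $ i = - d $ j" and d0: "\<forall>m. m \<noteq> i \<and> m \<noteq> j \<longrightarrow> d $ m = 0"
    using pd by (auto simp: pair_dir_def)
  define g where "g = grad x"
  define nd where "nd = norm d"
  define \<phi> where "\<phi> = (\<lambda>t. f (x + t *\<^sub>R d) - t * (g \<bullet> d) - L2 / 2 * t\<^sup>2 * nd\<^sup>2)"
  have hf: "((\<lambda>s. f (x + s *\<^sub>R d)) has_real_derivative (grad (x + t *\<^sub>R d) \<bullet> d)) (at t)" for t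
  proof -
    have h1: "((\<lambda>s. x + s *\<^sub>R d) has_derivative (\<lambda>s. s *\<^sub>R d)) (at t)"
      by (auto intro!: derivative_eq_intros)
    have h2: "(f has_derivative (\<lambda>h. grad (x + t *\<^sub>R d) \<bullet> h)) (at (x + t *\<^sub>R d))" using diff by blast
    have "((\<lambda>s. f (x + s *\<^sub>R d)) has_derivative (\<lambda>s. grad (x + t *\<^sub>R d) \<bullet> (s *\<^sub>R d))) (at t)"
      using has_derivative_compose[OF h1 h2] by simp
    moreover have "(\<lambda>s. grad (x + t *\<^sub>R d) \<bullet> (s *\<^sub>R d)) = (*) (grad (x + t *\<^sub>R d) \<bullet> d)"
      by (rule ext) (simp add: inner_scaleR_right mult.commute)
    ultimately show ?thesis by (simp add: has_field_derivative_def)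
  qed
  have hphi: "DERIV \<phi> t :> (grad (x + t *\<^sub>R d) \<bullet> d - g \<bullet> d - L2 * t * nd\<^sup>2)" for t
    unfolding \<phi>_def
    apply (rule derivative_eq_intros hf refl)+
    apply (simp add: power2_eq_square)
    done
  have neg: "grad (x + t *\<^sub>R d) \<bullet> d - g \<bullet> d - L2 * t * nd\<^sup>2 \<le> 0" if t: "0 \<le> t" "t \<le> 1" for t
  proof -
    let ?D = "grad (x + t *\<^sub>R d) - g"
    have feas: "x + t *\<^sub>R d \<in> feasible_set \<gamma> l u" using seg_feasible[OF x xd t] .
    have "pair_norm ?D i j \<le> L2 * norm (t *\<^sub>R d)"
    proof -
      have "i \<noteq> j \<and> (t *\<^sub>R d) $ i = - (t *\<^sub>R d) $ j
              \<and> (\<forall>m. m \<noteq> i \<and> m \<noteq> j \<longrightarrow> (t *\<^sub>R d) $ m = 0) \<and> x + t *\<^sub>R d \<in> feasible_set \<gamma> l u"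
        using feas ij dij d0 by auto
      moreover have "\<forall>i j d. i \<noteq> j \<and> d $ i = - d $ j
              \<and> (\<forall>m. m \<noteq> i \<and> m \<noteq> j \<longrightarrow> d $ m = 0) \<and> x + d \<in> feasible_set \<gamma> l u
              \<longrightarrow> pair_norm (grad (x + d) - grad x) i j \<le> L2 * norm d"
        using lip x by (rule bspec)
      ultimately show ?thesis unfolding g_def by (elim allE[of _ i] allE[of _ j] allE[of _ "t *\<^sub>R d"]) (erule mp)
    qed
    also have "\<dots> = L2 * t * nd" using t by (simp add: nd_def)
    finally have pn: "pair_norm ?D i j \<le> L2 * t * nd" .
    have "grad (x + t *\<^sub>R d) \<bullet> d - g \<bullet> d = ?D \<bullet> d" by (simp add: inner_diff_left)
    also have "\<dots> = ?D$i * d$i + ?D$j * d$j" using inner_pair[OF ij d0] .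
    also have "\<dots> \<le> pair_norm ?D i j * nd"
      unfolding pair_norm_def nd_def norm_pair[OF ij d0] by (rule cs2)
    also have "\<dots> \<le> L2 * t * nd * nd" using pn by (simp add: nd_def mult_right_mono)
    finally show ?thesis by (simp add: power2_eq_square mult.assoc)
  qed
  have "\<phi> 1 \<le> \<phi> 0"
  proof (rule DERIV_nonpos_imp_nonincreasing[of 0 1])
    fix s :: real assume "0 \<le> s" "s \<le> 1"
    then show "\<exists>y. DERIV \<phi> s :> y \<and> y \<le> 0" using hphi[of s] neg[of s] by blast
  qed simp
  then show ?thesis by (simp add: \<phi>_def g_def nd_def)
qed


lemma decomp:
  fixes d x g :: "real^'n" and L \<mu> :: real
  assumes sd: "(\<Sum>m\<in>UNIV. d $ m) = 0"
    and bx: "\<forall>m. l $ m \<le> x $ m \<and> x $ m \<le> u $ m"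
    and bxd: "\<forall>m. l $ m \<le> x $ m + d $ m \<and> x $ m + d $ m \<le> u $ m"
    and dnz: "d \<noteq> 0"
    and hmu: "\<forall>e i j. pair_dir i j e \<and> (\<forall>m. l $ m \<le> x $ m + e $ m \<and> x $ m + e $ m \<le> u $ m)
               \<longrightarrow> \<mu> \<le> g \<bullet> e + L / 2 * (norm e)\<^sup>2"
    and L: "L \<ge> 0"
  shows "\<exists>s::nat. 1 \<le> s \<and> s + 1 \<le> card {m. d $ m \<noteq> 0} \<and> real s * \<mu> \<le> g \<bullet> d + L / 2 * (norm d)\<^sup>2"
  using sd bxd dnz
proof (induction "card {m. d $ m \<noteq> 0}" arbitrary: d rule: less_induct)
  case less
  note sd = less.prems(1) and bxd = less.prems(2) and dnz = less.prems(3)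
  have "\<not> (\<forall>m\<in>UNIV. d $ m \<le> 0)"
  proof
    assume h: "\<forall>m\<in>UNIV. d $ m \<le> 0"
    have "(\<Sum>m\<in>UNIV. - d $ m) = 0" using sd by (simp add: sum_negf)
    then have "\<forall>m\<in>UNIV. - d $ m = 0" using h by (subst (asm) sum_nonneg_eq_0_iff) auto
    then have "d = 0" by (simp add: vec_eq_iff)
    then show False using dnz by simp
  qed
  then obtain i where di: "d $ i > 0" using not_le by blast
  have "\<not> (\<forall>m\<in>UNIV. d $ m \<ge> 0)"
  proof
    assume h: "\<forall>m\<in>UNIV. d $ m \<ge> 0"
    then have "\<forall>m\<in>UNIV. d $ m = 0" using sd by (subst (asm) sum_nonneg_eq_0_iff) auto
    then have "d = 0" by (simp add: vec_eq_iff)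
    then show False using dnz by simp
  qed
  then obtain j where dj: "d $ j < 0" using not_le by blast
  have ij: "i \<noteq> j" using di dj by auto
  define t where "t = min (d $ i) (- d $ j)"
  have t0: "t > 0" "t \<le> d $ i" "t \<le> - d $ j" using di dj by (auto simp: t_def)
  define e :: "real^'n" where "e = (\<chi> m. if m = i then t else if m = j then -t else 0)"
  have ei: "e $ i = t" and ej: "e $ j = - t" and eo: "\<forall>m. m \<noteq> i \<and> m \<noteq> j \<longrightarrow> e $ m = 0"
    using ij by (auto simp: e_def)
  have pe: "pair_dir i j e" using ij ei ej eo by (simp add: pair_dir_def)
  have bxe: "\<forall>m. l $ m \<le> x $ m + e $ m \<and> x $ m + e $ m \<le> u $ m"
  proof
    fix m
    show "l $ m \<le> x $ m + e $ m \<and> x $ m + e $ m \<le> u $ m"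
      using bx[rule_format, of m] bxd[rule_format, of m] ei ej eo t0
      by (cases "m = i"; cases "m = j") auto
  qed
  have mue: "\<mu> \<le> g \<bullet> e + L / 2 * (norm e)\<^sup>2" using hmu pe bxe by blast
  define d' where "d' = d - e"
  have se: "(\<Sum>m\<in>UNIV. e $ m) = 0" using sum_pair[OF ij, of "\<lambda>m. e $ m"] eo ei ej by simp
  have sd': "(\<Sum>m\<in>UNIV. d' $ m) = 0" using sd se by (simp add: d'_def sum_subtractf)
  have bxd': "\<forall>m. l $ m \<le> x $ m + d' $ m \<and> x $ m + d' $ m \<le> u $ m"
  proof
    fix m
    show "l $ m \<le> x $ m + d' $ m \<and> x $ m + d' $ m \<le> u $ m"
      using bx[rule_format, of m] bxd[rule_format, of m] ei ej eo t0
      by (cases "m = i"; cases "m = j") (auto simp: d'_def)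
  qed
  have sub: "{m. d' $ m \<noteq> 0} \<subset> {m. d $ m \<noteq> 0}"
  proof
    show "{m. d' $ m \<noteq> 0} \<subseteq> {m. d $ m \<noteq> 0}"
    proof
      fix m assume m: "m \<in> {m. d' $ m \<noteq> 0}"
      show "m \<in> {m. d $ m \<noteq> 0}"
      proof (rule ccontr)
        assume "m \<notin> {m. d $ m \<noteq> 0}"
        then have dm: "d $ m = 0" by simp
        then have "m \<noteq> i" "m \<noteq> j" using di dj by auto
        then have "e $ m = 0" using eo by blast
        then show False using m dm by (simp add: d'_def)
      qed
    qed
    show "{m. d' $ m \<noteq> 0} \<noteq> {m. d $ m \<noteq> 0}"
    proof (cases "t = d $ i")
      case True
      then have "d' $ i = 0" using ei by (simp add: d'_def)
      then have "i \<notin> {m. d' $ m \<noteq> 0}" "i \<in> {m. d $ m \<noteq> 0}" using di by auto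
      then show ?thesis by auto
    next
      case False
      then have "t = - d $ j" by (auto simp: t_def min_def split: if_splits)
      then have "d' $ j = 0" using ej by (simp add: d'_def)
      then have "j \<notin> {m. d' $ m \<noteq> 0}" "j \<in> {m. d $ m \<noteq> 0}" using dj by auto
      then show ?thesis by auto
    qed
  qed
  have cardlt: "card {m. d' $ m \<noteq> 0} < card {m. d $ m \<noteq> 0}"
    by (rule psubset_card_mono) (use sub in auto)
  have ed': "e \<bullet> d' \<ge> 0"
  proof -
    have "e \<bullet> d' = d' \<bullet> e" by (simp add: inner_commute)
    also have "\<dots> = d'$i * e$i + d'$j * e$j" using inner_pair[OF ij eo] .
    also have "\<dots> = t * (d $ i - t) + t * (- d $ j - t)" using ei ej by (simp add: d'_def algebra_simps)
    also have "\<dots> \<ge> 0" using t0 by simp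
    finally show ?thesis .
  qed
  have dd: "d = e + d'" by (simp add: d'_def)
  have nrm: "(norm d)\<^sup>2 \<ge> (norm e)\<^sup>2 + (norm d')\<^sup>2"
  proof -
    have "(norm d)\<^sup>2 = (e + d') \<bullet> (e + d')" using dd by (simp add: power2_norm_eq_inner)
    also have "\<dots> = e \<bullet> e + 2 * (e \<bullet> d') + d' \<bullet> d'"
      by (simp add: inner_add_left inner_add_right inner_commute)
    finally show ?thesis using ed' by (simp add: power2_norm_eq_inner)
  qed
  have Qsplit: "g \<bullet> d + L / 2 * (norm d)\<^sup>2 \<ge> (g \<bullet> e + L / 2 * (norm e)\<^sup>2) + (g \<bullet> d' + L / 2 * (norm d')\<^sup>2)"
  proof -
    have "g \<bullet> d = g \<bullet> e + g \<bullet> d'" using dd by (simp add: inner_add_right)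
    moreover have "L / 2 * ((norm e)\<^sup>2 + (norm d')\<^sup>2) \<le> L / 2 * (norm d)\<^sup>2"
      using nrm L by (intro mult_left_mono) auto
    ultimately show ?thesis by (simp add: algebra_simps)
  qed
  have c2: "card {m. d $ m \<noteq> 0} \<ge> 2"
  proof -
    have "{i, j} \<subseteq> {m. d $ m \<noteq> 0}" using di dj by auto
    then have "card {i, j} \<le> card {m. d $ m \<noteq> 0}" by (intro card_mono) auto
    then show ?thesis using ij by simp
  qed
  show ?case
  proof (cases "d' = 0")
    case True
    then show ?thesis using Qsplit mue c2 by (intro exI[of _ 1]) auto
  next
    case False
    from less.hyps[OF cardlt sd' bxd' False] obtain s where
      s: "1 \<le> s" "s + 1 \<le> card {m. d' $ m \<noteq> 0}" "real s * \<mu> \<le> g \<bullet> d' + L / 2 * (norm d')\<^sup>2"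
      by blast
    show ?thesis
      using s cardlt Qsplit mue by (intro exI[of _ "s + 1"]) (auto simp: algebra_simps)
  qed
qed


lemma pair_sum0:
  fixes e :: "real^'n"
  assumes "pair_dir i j e" shows "(\<Sum>m\<in>UNIV. e $ m) = 0"
  using assms sum_pair[of i j "\<lambda>m. e $ m"] by (simp add: pair_dir_def)

theorem mainTheorem11:
  fixes f :: "real^'n \<Rightarrow> real" and grad :: "real^'n \<Rightarrow> real^'n"
    and \<gamma> L2 \<mu>2 :: real and l u :: "real^'n" and xs :: "nat \<Rightarrow> real^'n"
  assumes n2: "CARD('n) \<ge> 2"
    and lu: "\<forall>m. l $ m \<le> u $ m"
    and nonempty: "feasible_set \<gamma> l u \<noteq> {}"
    and diff: "\<forall>x. (f has_derivative (\<lambda>h. grad x \<bullet> h)) (at x)"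
    and L2pos: "L2 > 0"
    and lip: "\<forall>x\<in>feasible_set \<gamma> l u. \<forall>i j d. i \<noteq> j \<and> d $ i = - d $ j
              \<and> (\<forall>m. m \<noteq> i \<and> m \<noteq> j \<longrightarrow> d $ m = 0) \<and> x + d \<in> feasible_set \<gamma> l u
              \<longrightarrow> pair_norm (grad (x + d) - grad x) i j \<le> L2 * norm d"
    and mu2pos: "\<mu>2 > 0"
    and pl: "\<forall>x\<in>feasible_set \<gamma> l u.
              - L2 * Inf {grad x \<bullet> (y - x) + L2 / 2 * (norm (y - x))\<^sup>2 | y. y \<in> feasible_set \<gamma> l u}
              \<ge> \<mu>2 * (f x - Inf (f ` feasible_set \<gamma> l u))"
    and x0: "xs 0 \<in> feasible_set \<gamma> l u"
    and step: "\<forall>k. \<exists>i j. pair_dir i j (xs (Suc k) - xs k) \<and> xs (Suc k) \<in> feasible_set \<gamma> l u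
              \<and> (\<forall>i' j' d'. pair_dir i' j' d' \<and> xs k + d' \<in> feasible_set \<gamma> l u \<longrightarrow>
                   grad (xs k) \<bullet> (xs (Suc k) - xs k) + L2 / 2 * (norm (xs (Suc k) - xs k))\<^sup>2
                   \<le> grad (xs k) \<bullet> d' + L2 / 2 * (norm d')\<^sup>2)"
  shows "\<forall>k. f (xs k) - Inf (f ` feasible_set \<gamma> l u)
           \<le> (1 - \<mu>2 / (L2 * (real CARD('n) - 1))) ^ k * (f (xs 0) - Inf (f ` feasible_set \<gamma> l u))"
proof -
  define X where "X = feasible_set \<gamma> l u"
  define fs where "fs = Inf (f ` X)"
  define N where "N = real CARD('n) - 1"
  define c where "c = 1 - \<mu>2 / (L2 * N)"
  define a where "a = (\<lambda>k. f (xs k) - fs)"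
  have N1: "N \<ge> 1" using n2 by (simp add: N_def)
  have feas: "xs k \<in> X" for k
    by (cases k) (use x0 step in \<open>auto simp: X_def\<close>)
  have XI: "X = cbox l u \<inter> {x. (\<Sum>m\<in>UNIV. x $ m) = \<gamma>}"
    by (auto simp: X_def feasible_set_def mem_box_cart)
  have "closed {x::real^'n. (\<Sum>m\<in>UNIV. x $ m) = \<gamma>}"
    by (rule closed_Collect_eq) (auto intro!: continuous_intros)
  then have cX: "compact X" unfolding XI by (intro compact_Int_closed compact_cbox)
  have "continuous_on X f"
    using diff by (intro has_derivative_continuous_on) (auto intro: has_derivative_at_withinI)
  then have "compact (f ` X)" using cX by (rule compact_continuous_image)
  then have bdd: "bdd_below (f ` X)" by (intro bounded_imp_bdd_below compact_imp_bounded)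
  have fs_le: "fs \<le> f x" if "x \<in> X" for x
    unfolding fs_def using bdd that by (intro cInf_lower) auto
  have rec: "a (Suc k) \<le> c * a k" for k
  proof -
    define x where "x = xs k"
    define d where "d = xs (Suc k) - x"
    define m where "m = grad x \<bullet> d + L2 / 2 * (norm d)\<^sup>2"
    obtain i j where pd: "pair_dir i j d" and xs1: "xs (Suc k) \<in> X"
      and opt: "\<forall>i' j' d'. pair_dir i' j' d' \<and> x + d' \<in> X \<longrightarrow> m \<le> grad x \<bullet> d' + L2 / 2 * (norm d')\<^sup>2"
      using step unfolding x_def d_def m_def X_def by blast
    have xX: "x \<in> X" using feas by (simp add: x_def)
    have xd: "x + d = xs (Suc k)" by (simp add: d_def)
    have desc: "f (xs (Suc k)) \<le> f x + m"
      using descent[OF diff lip, of x d i j] xX xs1 pd xd by (simp add: X_def m_def)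
    have ij: "i \<noteq> j" using pd by (simp add: pair_dir_def)
    have m0: "m \<le> 0"
    proof -
      have "pair_dir i j 0" using ij by (simp add: pair_dir_def)
      then show ?thesis using opt xX by fastforce
    qed
    have sx: "(\<Sum>m\<in>UNIV. x $ m) = \<gamma>" and bx: "\<forall>m. l $ m \<le> x $ m \<and> x $ m \<le> u $ m"
      using xX by (auto simp: X_def feasible_set_def)
    have hmu: "\<forall>e i j. pair_dir i j e \<and> (\<forall>m. l $ m \<le> x $ m + e $ m \<and> x $ m + e $ m \<le> u $ m)
               \<longrightarrow> m \<le> grad x \<bullet> e + L2 / 2 * (norm e)\<^sup>2"
    proof (intro allI impI)
      fix e i j assume h: "pair_dir i j e \<and> (\<forall>m. l $ m \<le> x $ m + e $ m \<and> x $ m + e $ m \<le> u $ m)"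
      then have "(\<Sum>m\<in>UNIV. e $ m) = 0" using pair_sum0 by blast
      then have "(\<Sum>m\<in>UNIV. (x + e) $ m) = \<gamma>" using sx by (simp add: sum.distrib)
      then have "x + e \<in> X" using h by (simp add: X_def feasible_set_def)
      then show "m \<le> grad x \<bullet> e + L2 / 2 * (norm e)\<^sup>2" using opt h by blast
    qed
    define S where "S = {grad x \<bullet> (y - x) + L2 / 2 * (norm (y - x))\<^sup>2 | y. y \<in> X}"
    have lb: "N * m \<le> z" if "z \<in> S" for z
    proof -
      obtain y where y: "y \<in> X" and z: "z = grad x \<bullet> (y - x) + L2 / 2 * (norm (y - x))\<^sup>2"
        using \<open>z \<in> S\<close> by (auto simp: S_def)
      show ?thesis
      proof (cases "y - x = 0")
        case True
        then show ?thesis using z m0 N1 by (simp add: mult_nonneg_nonpos)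
      next
        case False
        have sy: "(\<Sum>m\<in>UNIV. y $ m) = \<gamma>" and yb: "\<forall>m. l $ m \<le> y $ m \<and> y $ m \<le> u $ m"
          using y by (auto simp: X_def feasible_set_def)
        have sd: "(\<Sum>m\<in>UNIV. (y - x) $ m) = 0" using sx sy by (simp add: sum_subtractf)
        have bxd: "\<forall>m. l $ m \<le> x $ m + (y - x) $ m \<and> x $ m + (y - x) $ m \<le> u $ m" using yb by simp
        obtain s :: nat where s: "1 \<le> s" "s + 1 \<le> card {m. (y - x) $ m \<noteq> 0}"
          "real s * m \<le> grad x \<bullet> (y - x) + L2 / 2 * (norm (y - x))\<^sup>2"
          using decomp[OF sd bx bxd False hmu] L2pos by auto
        have "card {m. (y - x) $ m \<noteq> 0} \<le> CARD('n)" by (rule card_mono) auto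
        then have "real s \<le> N" using s(2) by (simp add: N_def)
        then have "N * m \<le> real s * m" using m0 by (simp add: mult_right_mono_neg)
        then show ?thesis using s(3) z by simp
      qed
    qed
    have "S \<noteq> {}" using xX by (auto simp: S_def)
    then have NmS: "N * m \<le> Inf S" using lb by (intro cInf_greatest) auto
    have plx: "- L2 * Inf S \<ge> \<mu>2 * a k"
      using pl xX by (simp add: S_def X_def a_def fs_def x_def)
    have "L2 * (N * m) \<le> L2 * Inf S" using NmS L2pos by (simp add: mult_left_mono)
    then have "L2 * N * m \<le> - (\<mu>2 * a k)"
      using plx by (simp add: algebra_simps)
    then have mle: "m \<le> - (\<mu>2 * a k) / (L2 * N)"
    proof -
      have "0 < L2 * N" using L2pos N1 by simp
      then show ?thesis using \<open>L2 * N * m \<le> - (\<mu>2 * a k)\<close>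
        by (subst pos_le_divide_eq[OF \<open>0 < L2 * N\<close>]) (simp add: mult.commute)
    qed
    have "a (Suc k) \<le> a k + m" using desc by (simp add: a_def x_def)
    also have "\<dots> \<le> a k - (\<mu>2 * a k) / (L2 * N)" using mle by simp
    also have "\<dots> = c * a k" by (simp add: c_def algebra_simps)
    finally show ?thesis .
  qed
  have a_nn: "a k \<ge> 0" for k using fs_le feas by (simp add: a_def)
  have main: "a k \<le> c ^ k * a 0" for k
  proof (cases "c \<ge> 0")
    case True
    show ?thesis
    proof (induction k)
      case (Suc k)
      have "a (Suc k) \<le> c * a k" by (rule rec)
      also have "\<dots> \<le> c * (c ^ k * a 0)" using Suc True by (rule mult_left_mono)
      finally show ?case by (simp add: mult.assoc)
    qed simp
  next
    case False
    have "a 1 \<le> c * a 0" using rec[of 0] by simp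
    then have "0 \<le> c * a 0" using a_nn[of 1] by linarith
    then have "a 0 \<le> 0" using False by (simp add: zero_le_mult_iff)
    then have "a 0 = 0" using a_nn[of 0] by linarith
    have "a k = 0" for k
    proof (induction k)
      case (Suc k)
      then show ?case using rec[of k] a_nn[of "Suc k"] by simp
    qed (use \<open>a 0 = 0\<close> in simp)
    then show ?thesis using \<open>a 0 = 0\<close> by simp
  qed
  show ?thesis using main by (simp add: a_def fs_def X_def c_def N_def)
qed

end
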